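(* Let $a \in \mathbb{R}$ and $w \in \mathbb{C}\setminus\{0\}$ with $(a,w) \in D_c$. Then the equation $z + a - w e^{-\tau z} = 0$ with $\tau = \tau_c(a,w)$ has no roots with positive real part and has at least one root on the imaginary axis.
   Context: $D_c := \{(a,w) \in \mathbb{R}\times(\mathbb{C}\setminus\{0\}) : \operatorname{Re}(w) < a < |w|\}$. For $(a,w) \in D_c$, $\tau_c(a,w) := \frac{1}{\sqrt{|w|^2-a^2}}\left[|\operatorname{Arg}(w)| - \arccos(a/|w|)\right] > 0$, where $\operatorname{Arg}(w)\in(-\pi,\pi]$ is the principal argument and $\arccos:[-1,1]\to[0,\pi]$. *)

theory Defs
  imports "HOL-Analysis.Analysis"
begin

definition D_c :: "(real \<times> complex) set" where
  "D_c = {(a, w). w \<noteq> 0 \<and> Re w < a \<and> a < cmod w}"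

definition tau_c :: "real \<Rightarrow> complex \<Rightarrow> real" where
  "tau_c a w = (\<bar>Arg w\<bar> - arccos (a / cmod w)) / sqrt ((cmod w)^2 - a^2)"

end

theory Submission
  imports Defs "HOL-Complex_Analysis.Complex_Analysis"
begin


lemma basics:
  assumes "(a, w) \<in> D_c"
  defines "r \<equiv> cmod w" and "\<phi> \<equiv> arccos (a / cmod w)" and "\<theta> \<equiv> Arg w"
    and "\<omega> \<equiv> sqrt ((cmod w)^2 - a^2)"
  shows "0 < r" "Re w = r * cos \<theta>" "Im w = r * sin \<theta>" "a = r * cos \<phi>" "\<omega> = r * sin \<phi>"
    "0 < \<phi>" "\<phi> < pi" "\<phi> < \<bar>\<theta>\<bar>" "-pi < \<theta>" "\<theta> \<le> pi" "0 < \<omega>"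
    "tau_c a w = (\<bar>\<theta>\<bar> - \<phi>) / \<omega>" "\<omega>^2 = r^2 - a^2"
proof -
  have w0: "w \<noteq> 0" and lt1: "Re w < a" and lt2: "a < cmod w" using assms(1) by (auto simp: D_c_def)
  show r0: "0 < r" using w0 r_def by simp
  have wr: "w = rcis r \<theta>" using rcis_cmod_Arg r_def \<theta>_def by metis
  show Rew: "Re w = r * cos \<theta>" "Im w = r * sin \<theta>" using wr by auto
  have rw: "- r \<le> Re w" using abs_Re_le_cmod[of w] r_def by linarith
  have c1: "-1 < a / r" "a / r < 1" using r0 lt1 lt2 rw r_def by (auto simp: field_simps)
  have ar: "a = r * cos \<phi>" using c1 r0 r_def \<phi>_def by simp
  then show "a = r * cos \<phi>" .
  have sphi: "sin \<phi> = sqrt (1 - (a/r)^2)" using c1 \<phi>_def r_def sin_arccos by simp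
  have "sqrt (r^2 - a^2) = sqrt (r^2 * (1 - (a/r)^2))" using r0 by (simp add: field_simps)
  also have "\<dots> = r * sqrt (1 - (a/r)^2)" using r0 by (simp add: real_sqrt_mult)
  finally show om: "\<omega> = r * sin \<phi>" using sphi \<omega>_def r_def by simp
  show p0: "0 < \<phi>" "\<phi> < pi" using c1 \<phi>_def r_def arccos_lt_bounded by auto
  show "-pi < \<theta>" "\<theta> \<le> pi" using Arg_bounded \<theta>_def by auto
  have "cos \<bar>\<theta>\<bar> < cos \<phi>" using Rew lt1 ar r0 by (simp add: cos_abs_real)
  then show "\<phi> < \<bar>\<theta>\<bar>" using p0 Arg_bounded[of w] \<theta>_def
    by (subst (asm) cos_mono_less_eq) auto
  have "0 < sin \<phi>" using p0 sin_gt_zero by auto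
  then show "0 < \<omega>" using om r0 by simp
  show "tau_c a w = (\<bar>\<theta>\<bar> - \<phi>) / \<omega>" by (simp add: tau_c_def \<theta>_def \<phi>_def \<omega>_def)
  have "\<bar>a\<bar> < r" using lt2 rw lt1 r_def by auto
  then have "\<bar>a\<bar>^2 < r^2" by (intro power_strict_mono) auto
  then have "a^2 < r^2" by simp
  then show "\<omega>^2 = r^2 - a^2" using \<omega>_def r_def by simp
qed


definition Fq :: "real \<Rightarrow> complex \<Rightarrow> real \<Rightarrow> complex \<Rightarrow> complex" where
  "Fq a w t z = z + of_real a - w * exp (- of_real t * z)"

lemma Fq_imag:
  "Fq a w t (\<i> * of_real y) = Complex (a - cmod w * cos (Arg w - t*y)) (y - cmod w * sin (Arg w - t*y))"
proof -
  have wr: "w = rcis (cmod w) (Arg w)" using rcis_cmod_Arg by metis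
  have e: "exp (- of_real t * (\<i> * of_real y)) = cis (- (t*y))"
    by (simp add: cis_conv_exp mult_ac)
  have "w * cis (- (t*y)) = rcis (cmod w) (Arg w - t*y)"
    by (subst (1) wr) (simp add: rcis_def cis_mult)
  then show ?thesis unfolding Fq_def e
    by (simp add: complex_eq_iff rcis_def)
qed

lemma no_imag:
  assumes "(a, w) \<in> D_c" "0 \<le> t" "t < tau_c a w"
  shows "Fq a w t (\<i> * of_real y) \<noteq> 0"
proof
  define r where "r = cmod w"
  define \<phi> where "\<phi> = arccos (a / cmod w)"
  define \<theta> where "\<theta> = Arg w"
  define \<omega> where "\<omega> = sqrt ((cmod w)^2 - a^2)"
  note B = basics[OF assms(1), folded r_def \<phi>_def \<theta>_def \<omega>_def]
  assume "Fq a w t (\<i> * of_real y) = 0"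
  then have e1: "a = r * cos (\<theta> - t*y)" and e2: "y = r * sin (\<theta> - t*y)"
    unfolding Fq_imag by (simp_all add: complex_eq_iff r_def \<theta>_def)
  have "a^2 = r^2 * (cos (\<theta> - t*y))^2" using e1 by (simp add: power_mult_distrib)
  moreover have "y^2 = r^2 * (sin (\<theta> - t*y))^2" using e2 by (metis power_mult_distrib)
  ultimately have "a^2 + y^2 = r^2 * ((cos (\<theta> - t*y))^2 + (sin (\<theta> - t*y))^2)"
    by (simp only: distrib_left)
  then have "a^2 + y^2 = r^2" by simp
  then have "y^2 = \<omega>^2" using B(13) by simp
  then have yy: "y = \<omega> \<or> y = - \<omega>" using B(11) by (metis power2_eq_iff)
  have tw: "t * \<omega> < \<bar>\<theta>\<bar> - \<phi>" using assms(3) B(11,12) by (simp add: pos_less_divide_eq)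
  have tw0: "0 \<le> t * \<omega>" using assms(2) B(11) by simp
  obtain n :: int where n: "2 * pi * n \<noteq> 0" "\<bar>2 * pi * n\<bar> < 2 * pi"
  proof (cases "y = \<omega>")
    case True
    then have "sin \<phi> = sin (\<theta> - t*\<omega>) \<and> cos \<phi> = cos (\<theta> - t*\<omega>)"
      using e1 e2 B(1,4,5) by auto
    then obtain n :: int where "\<phi> = \<theta> - t*\<omega> + 2*pi*n" using sin_cos_eq_iff by blast
    then have "2*pi*n = \<phi> - \<theta> + t*\<omega>" by simp
    moreover have "\<phi> - \<theta> + t*\<omega> \<noteq> 0 \<and> \<bar>\<phi> - \<theta> + t*\<omega>\<bar> < 2*pi"
      using tw tw0 B(6,7,8,9,10) by (cases "\<theta> \<ge> 0") auto
    ultimately show ?thesis using that by metis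
  next
    case False
    then have yw: "y = - \<omega>" using yy by simp
    then have "r * sin (-\<phi>) = r * sin (\<theta> + t*\<omega>)" "r * cos (-\<phi>) = r * cos (\<theta> + t*\<omega>)"
      using e1 e2 B(1,4,5) by auto
    then have "sin (-\<phi>) = sin (\<theta> + t*\<omega>) \<and> cos (-\<phi>) = cos (\<theta> + t*\<omega>)"
      using B(1) by (metis mult_cancel_left less_irrefl)
    then obtain n :: int where "-\<phi> = \<theta> + t*\<omega> + 2*pi*n" using sin_cos_eq_iff by blast
    then have "2*pi*n = -\<phi> - \<theta> - t*\<omega>" by simp
    moreover have "-\<phi> - \<theta> - t*\<omega> \<noteq> 0 \<and> \<bar>-\<phi> - \<theta> - t*\<omega>\<bar> < 2*pi"
      using tw tw0 B(6,7,8,9,10) by (cases "\<theta> \<ge> 0") auto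
    ultimately show ?thesis using that by metis
  qed
  then have "\<bar>real_of_int n\<bar> < 1" "real_of_int n \<noteq> 0" by (auto simp: abs_mult)
  then have "real_of_int (-1) < real_of_int n" "real_of_int n < real_of_int 1" "n \<noteq> 0" by auto
  then have "-1 < n" "n < 1" "n \<noteq> 0" by (simp only: of_int_less_iff)+
  then show False by linarith
qed

lemma imag_root:
  assumes "(a, w) \<in> D_c"
  shows "\<exists>y. Fq a w (tau_c a w) (\<i> * of_real y) = 0"
proof -
  define r where "r = cmod w"
  define \<phi> where "\<phi> = arccos (a / cmod w)"
  define \<theta> where "\<theta> = Arg w"
  define \<omega> where "\<omega> = sqrt ((cmod w)^2 - a^2)"
  note B = basics[OF assms(1), folded r_def \<phi>_def \<theta>_def \<omega>_def]
  have tw: "tau_c a w * \<omega> = \<bar>\<theta>\<bar> - \<phi>" using B(11,12) by simp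
  show ?thesis
  proof (cases "\<theta> \<ge> 0")
    case True
    then have "\<theta> - tau_c a w * \<omega> = \<phi>" using tw by simp
    then have "Fq a w (tau_c a w) (\<i> * of_real \<omega>) = 0"
      unfolding Fq_imag using B(4,5) by (simp add: complex_eq_iff r_def \<theta>_def[symmetric])
    then show ?thesis by blast
  next
    case False
    then have "\<theta> - tau_c a w * (-\<omega>) = -\<phi>" using tw by simp
    then have "Fq a w (tau_c a w) (\<i> * of_real (-\<omega>)) = 0"
      unfolding Fq_imag using B(4,5) by (simp add: complex_eq_iff r_def \<theta>_def[symmetric])
    then show ?thesis by blast
  qed
qed


lemma Fq_holo: "Fq a w t holomorphic_on S"
  unfolding Fq_def by (intro holomorphic_intros)

lemma Fq_cont: "continuous_on S (Fq a w t)"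
  unfolding Fq_def by (intro continuous_intros)

lemma Fq_close:
  assumes "norm z \<le> R" "0 \<le> R" "\<bar>s - t\<bar> * R \<le> 1/2"
  shows "norm (Fq a w s z - Fq a w t z) \<le> norm w * exp (\<bar>t\<bar>*R) * (3/2 * (R * \<bar>s - t\<bar>))"
proof -
  define u where "u = - of_real (s - t) * z"
  have es: "exp (- of_real s * z) = exp (- of_real t * z) * exp u"
  proof -
    have "- of_real s * z = - of_real t * z + u" unfolding u_def by (simp add: algebra_simps)
    then show ?thesis by (metis exp_add)
  qed
  have d: "Fq a w s z - Fq a w t z = - (w * exp (- of_real t * z) * (exp u - 1))"
    unfolding Fq_def es by (simp add: algebra_simps)
  have "u = of_real (t - s) * z" unfolding u_def by simp
  then have "norm u = \<bar>t - s\<bar> * norm z" by (simp only: norm_mult norm_of_real)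
  then have "norm u = \<bar>s - t\<bar> * norm z" by (simp add: abs_minus_commute)
  then have nu: "norm u \<le> \<bar>s - t\<bar> * R"
    using assms(1) by (simp add: mult_left_mono)
  then have nu2: "norm u \<le> 1/2" using assms(3) by linarith
  have "norm (exp u - 1) \<le> 3/2 * norm u" using norm_exp_bounds(2)[OF nu2] .
  also have "\<dots> \<le> 3/2 * (R * \<bar>s - t\<bar>)" using nu by (simp add: mult_ac)
  finally have b1: "norm (exp u - 1) \<le> 3/2 * (R * \<bar>s - t\<bar>)" .
  have "Re (- of_real t * z) \<le> \<bar>t\<bar> * R"
  proof -
    have "Re (- of_real t * z) = - t * Re z" by simp
    also have "\<dots> \<le> \<bar>t\<bar> * \<bar>Re z\<bar>" by (simp add: abs_mult[symmetric])
    also have "\<dots> \<le> \<bar>t\<bar> * R" using abs_Re_le_cmod[of z] assms(1)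
      by (intro mult_left_mono) auto
    finally show ?thesis .
  qed
  then have b2: "norm (exp (- of_real t * z)) \<le> exp (\<bar>t\<bar>*R)" by simp
  have "norm (Fq a w s z - Fq a w t z) = norm w * norm (exp (- of_real t * z)) * norm (exp u - 1)"
    unfolding d by (simp add: norm_mult)
  also have "\<dots> \<le> norm w * exp (\<bar>t\<bar>*R) * (3/2 * (R * \<bar>s - t\<bar>))"
    using b1 b2 by (intro mult_mono) auto
  finally show ?thesis .
qed

lemma Fq_unif:
  assumes "0 < \<epsilon>" "0 \<le> R"
  obtains \<delta> where "0 < \<delta>" "\<And>s (z::complex). \<bar>s - t\<bar> < \<delta> \<Longrightarrow> norm z \<le> R \<Longrightarrow> norm (Fq a w s z - Fq a w t z) < \<epsilon>"
proof -
  define K where "K = norm w * exp (\<bar>t\<bar>*R) * (3/2 * R)"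
  have K0: "0 \<le> K" unfolding K_def using assms by simp
  define \<delta> where "\<delta> = min (1 / (2 * (R + 1))) (\<epsilon> / (K + 1))"
  have d0: "0 < \<delta>" unfolding \<delta>_def using assms K0 by simp
  show ?thesis
  proof (rule that[OF d0])
    fix s and z :: complex assume sd: "\<bar>s - t\<bar> < \<delta>" and z: "norm z \<le> R"
    have "\<bar>s - t\<bar> < 1 / (2 * (R + 1))" using sd unfolding \<delta>_def by simp
    then have "\<bar>s - t\<bar> * (2 * (R + 1)) < 1" using assms by (simp add: pos_less_divide_eq)
    then have c: "\<bar>s - t\<bar> * R \<le> 1/2" 
    proof -
      have "\<bar>s - t\<bar> * R \<le> \<bar>s - t\<bar> * (R + 1)" by (simp add: mult_left_mono)
      then show ?thesis using \<open>\<bar>s - t\<bar> * (2 * (R + 1)) < 1\<close> by linarith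
    qed
    have "norm (Fq a w s z - Fq a w t z) \<le> K * \<bar>s - t\<bar>"
      using Fq_close[OF z assms(2) c] unfolding K_def by (simp add: mult_ac)
    also have "\<dots> \<le> (K + 1) * \<bar>s - t\<bar>" by (simp add: mult_right_mono)
    also have "\<dots> < \<epsilon>"
    proof -
      have "\<bar>s - t\<bar> < \<epsilon> / (K + 1)" using sd unfolding \<delta>_def by simp
      then show ?thesis using K0 by (simp add: pos_less_divide_eq mult_ac)
    qed
    finally show "norm (Fq a w s z - Fq a w t z) < \<epsilon>" .
  qed
qed

lemma root_bound:
  assumes "0 \<le> t" "0 \<le> Re z" "Fq a w t z = 0"
  shows "norm z \<le> \<bar>a\<bar> + norm w"
proof -
  have "z = w * exp (- of_real t * z) - of_real a" using assms(3) unfolding Fq_def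
    by (simp add: algebra_simps)
  then have "norm z \<le> norm (w * exp (- of_real t * z)) + \<bar>a\<bar>"
    by (metis norm_triangle_ineq4 norm_of_real)
  moreover have "norm (exp (- of_real t * z)) \<le> 1" using assms(1,2)
    by (simp add: mult_nonneg_nonneg)
  then have "norm (w * exp (- of_real t * z)) \<le> norm w"
    by (simp add: norm_mult mult_left_le)
  ultimately show ?thesis by linarith
qed



lemma Fq_nonzero_somewhere:
  assumes "Fq a w t z0 = 0"
  obtains \<beta> where "Fq a w t \<beta> \<noteq> 0"
proof (cases "t = 0")
  case True
  have "Fq a w t (z0 + 1) = Fq a w t z0 + 1" using True by (simp add: Fq_def)
  then show ?thesis using assms that by fastforce
next
  case False
  have "exp (- of_real t * (z0 + 2 * of_real pi * \<i> / of_real t)) = exp (- of_real t * z0 - 2 * of_real pi * \<i>)"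
    using False by (simp add: algebra_simps)
  also have "\<dots> = exp (- of_real t * z0)" by (simp add: exp_diff)
  finally have "Fq a w t (z0 + 2 * of_real pi * \<i> / of_real t) = Fq a w t z0 + 2 * of_real pi * \<i> / of_real t"
    by (simp add: Fq_def)
  then show ?thesis using assms that False by fastforce
qed

lemma open_pos:
  assumes z0: "Fq a w t z0 = 0" "0 < Re z0"
  obtains \<delta> where "0 < \<delta>" "\<And>s. \<bar>s - t\<bar> < \<delta> \<Longrightarrow> \<exists>z. 0 < Re z \<and> Fq a w s z = 0"
proof -
  obtain \<beta> where \<beta>: "Fq a w t \<beta> \<noteq> 0" using Fq_nonzero_somewhere[OF z0(1)] .
  obtain e where e: "0 < e" "\<And>z. z \<in> ball z0 e - {z0} \<Longrightarrow> Fq a w t z \<noteq> 0"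
    using isolated_zeros[OF Fq_holo[of a w t UNIV] open_UNIV connected_UNIV _ z0(1) _ \<beta>] by auto
  define \<rho> where "\<rho> = min (e/2) (Re z0 / 2)"
  have \<rho>0: "0 < \<rho>" unfolding \<rho>_def using e z0 by simp
  have sph: "Fq a w t z \<noteq> 0" if "z \<in> sphere z0 \<rho>" for z
  proof -
    have dz: "dist z0 z = \<rho>" using that by simp
    then have "z \<noteq> z0" using \<rho>0 by auto
    moreover have "dist z0 z < e" using dz e(1) unfolding \<rho>_def by simp
    ultimately show ?thesis using e(2)[of z] by auto
  qed
  have cb: "0 < Re z" if "z \<in> cball z0 \<rho>" for z
  proof -
    have "\<bar>Re (z0 - z)\<bar> \<le> norm (z0 - z)" by (rule abs_Re_le_cmod)
    then show ?thesis using that z0(2) unfolding \<rho>_def by (auto simp: dist_norm)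
  qed
  obtain zm where zm: "zm \<in> sphere z0 \<rho>" "\<And>y. y \<in> sphere z0 \<rho> \<Longrightarrow> norm (Fq a w t zm) \<le> norm (Fq a w t y)"
    using continuous_attains_inf[of "sphere z0 \<rho>" "\<lambda>z. norm (Fq a w t z)"] \<rho>0
      continuous_on_norm[OF Fq_cont[of "sphere z0 \<rho>" a w t]] by auto
  define m where "m = norm (Fq a w t zm)"
  have m0: "0 < m" unfolding m_def using sph zm(1) by simp
  have R0: "0 \<le> norm z0 + \<rho>" using \<rho>0 by simp
  obtain \<delta> where d: "0 < \<delta>" "\<And>s (z::complex). \<bar>s - t\<bar> < \<delta> \<Longrightarrow> norm z \<le> norm z0 + \<rho> \<Longrightarrow> norm (Fq a w s z - Fq a w t z) < m/2"
    using Fq_unif[of "m/2" "norm z0 + \<rho>" t a w] m0 R0 by auto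
  show ?thesis
  proof (rule that[OF d(1)])
    fix s assume s: "\<bar>s - t\<bar> < \<delta>"
    show "\<exists>z. 0 < Re z \<and> Fq a w s z = 0"
    proof (rule ccontr)
      assume "\<not> ?thesis"
      then have nz: "Fq a w s z \<noteq> 0" if "z \<in> cball z0 \<rho>" for z using cb that by blast
      have inb: "norm z \<le> norm z0 + \<rho>" if "z \<in> cball z0 \<rho>" for z
        using that norm_triangle_ineq2[of z z0] by (auto simp: dist_norm norm_minus_commute)
      define g where "g = (\<lambda>z. inverse (Fq a w s z))"
      have "norm (g z0) \<le> 2/m"
      proof (rule maximum_modulus_frontier[of g "cball z0 \<rho>"])
        show "g holomorphic_on interior (cball z0 \<rho>)"
          unfolding g_def using nz by (intro holomorphic_intros Fq_holo) auto
        show "continuous_on (closure (cball z0 \<rho>)) g"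
          unfolding g_def using nz by (intro continuous_intros Fq_cont) auto
        show "bounded (cball z0 \<rho>)" by simp
        show "z0 \<in> cball z0 \<rho>" using \<rho>0 by simp
        fix z assume "z \<in> frontier (cball z0 \<rho>)"
        then have zs: "z \<in> sphere z0 \<rho>" by simp
        then have zc: "z \<in> cball z0 \<rho>" by auto
        have "m \<le> norm (Fq a w t z)" using zm(2)[OF zs] m_def by simp
        moreover have "norm (Fq a w s z - Fq a w t z) < m/2" using d(2)[OF s inb[OF zc]] .
        ultimately have mn: "m/2 < norm (Fq a w s z)" using norm_triangle_ineq2[of "Fq a w t z" "Fq a w s z"]
          by (simp add: norm_minus_commute)
        have n0: "0 < norm (Fq a w s z)" using mn m0 by linarith
        have "norm (g z) = 1 / norm (Fq a w s z)" by (simp add: g_def norm_inverse divide_inverse)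
        also have "\<dots> \<le> 2/m" using mn n0 m0 by (simp add: field_simps)
        finally show "norm (g z) \<le> 2/m" .
      qed
      moreover have "norm (g z0) = 1 / norm (Fq a w s z0)" by (simp add: g_def norm_inverse divide_inverse)
      moreover have "0 < norm (Fq a w s z0)" using nz[of z0] \<rho>0 by simp
      ultimately have "m/2 \<le> norm (Fq a w s z0)" using m0 by (simp add: field_simps)
      moreover have "norm (Fq a w s z0 - Fq a w t z0) < m/2" using d(2)[OF s inb] \<rho>0 by simp
      ultimately show False using z0(1) by simp
    qed
  qed
qed



lemma open_nonpos:
  assumes D: "(a, w) \<in> D_c" and t: "0 \<le> t" "t < tau_c a w"
    and P: "\<forall>z. 0 < Re z \<longrightarrow> Fq a w t z \<noteq> 0"
  obtains \<delta> where "0 < \<delta>" "\<And>s. \<bar>s - t\<bar> < \<delta> \<Longrightarrow> 0 \<le> s \<Longrightarrow> \<forall>z. 0 < Re z \<longrightarrow> Fq a w s z \<noteq> 0"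
proof -
  define R where "R = \<bar>a\<bar> + norm w"
  define K where "K = {z. 0 \<le> Re z} \<inter> cball 0 R"
  have "compact K" unfolding K_def
    using closed_halfspace_Re_ge[of 0] by (metis Int_commute closed_Int_compact compact_cball)
  have "0 \<in> K" unfolding K_def R_def by simp
  then have K0: "K \<noteq> {}" by blast
  have nzK: "Fq a w t z \<noteq> 0" if "z \<in> K" for z
  proof (cases "Re z = 0")
    case True
    then have "z = \<i> * of_real (Im z)" by (simp add: complex_eq_iff)
    then show ?thesis using no_imag[OF D t] by metis
  next
    case False
    then show ?thesis using P that unfolding K_def by auto
  qed
  obtain zm where zm: "zm \<in> K" "\<And>y. y \<in> K \<Longrightarrow> norm (Fq a w t zm) \<le> norm (Fq a w t y)"
    using continuous_attains_inf[OF \<open>compact K\<close> K0 continuous_on_norm[OF Fq_cont[of K a w t]]] by auto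
  define m where "m = norm (Fq a w t zm)"
  have m0: "0 < m" unfolding m_def using nzK zm(1) by simp
  have R0: "0 \<le> R" unfolding R_def by simp
  obtain \<delta> where d: "0 < \<delta>" "\<And>s (z::complex). \<bar>s - t\<bar> < \<delta> \<Longrightarrow> norm z \<le> R \<Longrightarrow> norm (Fq a w s z - Fq a w t z) < m"
    using Fq_unif[OF m0 R0] by metis
  show ?thesis
  proof (rule that[OF d(1)])
    fix s assume s: "\<bar>s - t\<bar> < \<delta>" "0 \<le> s"
    show "\<forall>z. 0 < Re z \<longrightarrow> Fq a w s z \<noteq> 0"
    proof (intro allI impI notI)
      fix z assume z: "0 < Re z" "Fq a w s z = 0"
      have nz: "norm z \<le> R" unfolding R_def using root_bound[OF s(2) _ z(2)] z(1) by simp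
      then have "z \<in> K" unfolding K_def using z(1) by simp
      then have "m \<le> norm (Fq a w t z)" using zm(2) m_def by simp
      moreover have "norm (Fq a w s z - Fq a w t z) < m" using d(2)[OF s(1) nz] .
      ultimately show False using z(2) by (simp add: norm_minus_commute)
    qed
  qed
qed

lemma P0:
  assumes "(a, w) \<in> D_c" "0 < Re z"
  shows "Fq a w 0 z \<noteq> 0"
proof
  assume "Fq a w 0 z = 0"
  then have "z = w - of_real a" by (simp add: Fq_def algebra_simps)
  then have "Re z = Re w - a" by simp
  then show False using assms by (auto simp: D_c_def)
qed

lemma all_below:
  assumes D: "(a, w) \<in> D_c" and t1: "0 \<le> t1" "t1 < tau_c a w"
  shows "\<forall>z. 0 < Re z \<longrightarrow> Fq a w t1 z \<noteq> 0"
proof (rule ccontr)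
  define P where "P = (\<lambda>t. \<forall>z. 0 < Re z \<longrightarrow> Fq a w t z \<noteq> 0)"
  assume "\<not> ?thesis"
  then have nP1: "\<not> P t1" unfolding P_def .
  define f :: "real \<Rightarrow> real" where "f = (\<lambda>t. if P t then 0 else 1)"
  have "continuous_on {0..t1} f"
    unfolding continuous_on_iff
  proof (intro ballI allI impI)
    fix x :: real and e :: real assume x: "x \<in> {0..t1}" and e: "0 < e"
    show "\<exists>d>0. \<forall>x'\<in>{0..t1}. dist x' x < d \<longrightarrow> dist (f x') (f x) < e"
    proof (cases "P x")
      case True
      obtain \<delta> where "0 < \<delta>" "\<And>s. \<bar>s - x\<bar> < \<delta> \<Longrightarrow> 0 \<le> s \<Longrightarrow> P s"
        using open_nonpos[OF D, of x] x t1 True unfolding P_def by auto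
      then show ?thesis using True e unfolding f_def
        by (intro exI[of _ \<delta>]) (auto simp: dist_real_def)
    next
      case False
      then obtain z0 where "0 < Re z0" "Fq a w x z0 = 0" unfolding P_def by auto
      then obtain \<delta> where "0 < \<delta>" "\<And>s. \<bar>s - x\<bar> < \<delta> \<Longrightarrow> \<not> P s"
        using open_pos unfolding P_def by metis
      then show ?thesis using False e unfolding f_def
        by (intro exI[of _ \<delta>]) (auto simp: dist_real_def)
    qed
  qed
  moreover have "f 0 \<le> 1/2" "1/2 \<le> f t1" using P0[OF D] nP1 unfolding f_def P_def by auto
  ultimately obtain x where "f x = 1/2" using IVT'[of f 0 "1/2" t1] t1 by auto
  then show False unfolding f_def by (auto split: if_splits)
qed

lemma at_crit:
  assumes D: "(a, w) \<in> D_c"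
  shows "\<forall>z. 0 < Re z \<longrightarrow> Fq a w (tau_c a w) z \<noteq> 0"
proof (rule ccontr)
  assume "\<not> ?thesis"
  then obtain z0 where "0 < Re z0" "Fq a w (tau_c a w) z0 = 0" by auto
  then obtain \<delta> where d: "0 < \<delta>" "\<And>s. \<bar>s - tau_c a w\<bar> < \<delta> \<Longrightarrow> \<exists>z. 0 < Re z \<and> Fq a w s z = 0"
    using open_pos by metis
  define r where "r = cmod w"
  define \<phi> where "\<phi> = arccos (a / cmod w)"
  define \<theta> where "\<theta> = Arg w"
  define \<omega> where "\<omega> = sqrt ((cmod w)^2 - a^2)"
  note B = basics[OF D, folded r_def \<phi>_def \<theta>_def \<omega>_def]
  have tc: "0 < tau_c a w" using B(8,11,12) by simp
  define s where "s = tau_c a w - min (\<delta>/2) (tau_c a w / 2)"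
  have "0 \<le> s" "s < tau_c a w" "\<bar>s - tau_c a w\<bar> < \<delta>" unfolding s_def using tc d(1) by auto
  then show False using all_below[OF D] d(2) by blast
qed


theorem mainTheorem2:
  fixes a :: real and w :: complex
  assumes "w \<noteq> 0" and "(a, w) \<in> D_c"
  shows "(\<forall>z::complex. z + of_real a - w * exp (- of_real (tau_c a w) * z) = 0 \<longrightarrow> Re z \<le> 0)
       \<and> (\<exists>z::complex. Re z = 0 \<and> z + of_real a - w * exp (- of_real (tau_c a w) * z) = 0)"
proof
  show "\<forall>z::complex. z + of_real a - w * exp (- of_real (tau_c a w) * z) = 0 \<longrightarrow> Re z \<le> 0"
    using at_crit[OF assms(2)] unfolding Fq_def by (meson not_le)
  obtain y where "Fq a w (tau_c a w) (\<i> * of_real y) = 0" using imag_root[OF assms(2)] by blast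
  then show "\<exists>z::complex. Re z = 0 \<and> z + of_real a - w * exp (- of_real (tau_c a w) * z) = 0"
    unfolding Fq_def by (intro exI[of _ "\<i> * of_real y"]) simp
qed

end
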